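(* Let $\Omega\subset\mathbb{R}^n$ be a bounded domain, let $S_1,S_2$ be disjoint compact subsets of $\overline\Omega$, and let $V_i\in L^1_{loc}(\Omega)\cap L^\infty_{loc}(\overline\Omega\setminus S_i)$, $i=1,2$. For a potential $W$ set $$\lambda_1(W):=\inf_{u\in C_0^\infty(\Omega)}\frac{\int_\Omega(|\nabla u|^2-Wu^2)dx}{\int_\Omega u^2dx}.$$ If $\lambda_1(V_1)>-\infty$ and $\lambda_1(V_2)>-\infty$, then $\lambda_1(V_1+V_2)>-\infty$. *)

theory Defs
  imports "HOL-Analysis.Analysis"
begin

fun iter_partial :: "'a::euclidean_space list \<Rightarrow> ('a \<Rightarrow> real) \<Rightarrow> 'a \<Rightarrow> real" where
  "iter_partial [] f = f"
| "iter_partial (b # bs) f = (\<lambda>x. frechet_derivative (iter_partial bs f) (at x) b)"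

definition smooth_fun :: "('a::euclidean_space \<Rightarrow> real) \<Rightarrow> bool" where
  "smooth_fun f \<longleftrightarrow> (\<forall>bs. set bs \<subseteq> Basis \<longrightarrow> (\<forall>x. iter_partial bs f differentiable (at x)))"

definition test_fun :: "'a::euclidean_space set \<Rightarrow> ('a \<Rightarrow> real) \<Rightarrow> bool" where
  "test_fun \<Omega> u \<longleftrightarrow> smooth_fun u \<and> compact (closure {x. u x \<noteq> 0}) \<and> closure {x. u x \<noteq> 0} \<subseteq> \<Omega>"

definition grad :: "('a::euclidean_space \<Rightarrow> real) \<Rightarrow> 'a \<Rightarrow> 'a" where
  "grad u x = (\<Sum>b\<in>Basis. frechet_derivative u (at x) b *\<^sub>R b)"

definition L1_loc :: "'a::euclidean_space set \<Rightarrow> ('a \<Rightarrow> real) \<Rightarrow> bool" where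
  "L1_loc \<Omega> V \<longleftrightarrow> (\<forall>K. compact K \<and> K \<subseteq> \<Omega> \<longrightarrow> set_integrable lebesgue K V)"

(* V (defined on \<Omega>) belongs to L^\<infinity>_loc(T): essentially bounded on \<Omega> near every point of T *)
definition Linf_loc_on :: "'a::euclidean_space set \<Rightarrow> 'a set \<Rightarrow> ('a \<Rightarrow> real) \<Rightarrow> bool" where
  "Linf_loc_on \<Omega> T V \<longleftrightarrow>
     (\<forall>x\<in>T. \<exists>e>0. \<exists>M. AE y in lebesgue. y \<in> ball x e \<inter> \<Omega> \<longrightarrow> \<bar>V y\<bar> \<le> M)"

definition lambda1 :: "'a::euclidean_space set \<Rightarrow> ('a \<Rightarrow> real) \<Rightarrow> ereal" where
  "lambda1 \<Omega> W = (INF u \<in> {u. test_fun \<Omega> u \<and> u \<noteq> (\<lambda>x. 0)}.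
      ereal ((LINT x:\<Omega>|lebesgue. (norm (grad u x))\<^sup>2 - W x * (u x)\<^sup>2) / (LINT x:\<Omega>|lebesgue. (u x)\<^sup>2)))"

end

theory Submission
  imports Defs "HOL-Computational_Algebra.Polynomial"
begin
definition pd :: "'a::euclidean_space \<Rightarrow> ('a \<Rightarrow> real) \<Rightarrow> 'a \<Rightarrow> real" where
  "pd b f = (\<lambda>x. frechet_derivative f (at x) b)"

lemma iter_partial_Cons: "iter_partial (b # bs) f = pd b (iter_partial bs f)"
  by (simp add: pd_def)

lemma iter_partial_snoc: "iter_partial (bs @ [b]) f = iter_partial bs (pd b f)"
  by (induction bs) (auto simp: pd_def)

definition sm :: "nat \<Rightarrow> ('a::euclidean_space \<Rightarrow> real) \<Rightarrow> bool" where
  "sm n f \<longleftrightarrow> (\<forall>bs. set bs \<subseteq> Basis \<and> length bs \<le> n \<longrightarrow> (\<forall>x. iter_partial bs f differentiable (at x)))"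

lemma smooth_fun_sm: "smooth_fun f \<longleftrightarrow> (\<forall>n. sm n f)"
  unfolding smooth_fun_def sm_def by auto

lemma sm_0: "sm 0 f \<longleftrightarrow> (\<forall>x. f differentiable (at x))"
  unfolding sm_def by auto

lemma sm_Suc: "sm (Suc n) f \<longleftrightarrow> (\<forall>x. f differentiable (at x)) \<and> (\<forall>b\<in>Basis. sm n (pd b f))"
proof
  assume H: "sm (Suc n) f"
  show "(\<forall>x. f differentiable (at x)) \<and> (\<forall>b\<in>Basis. sm n (pd b f))"
  proof (intro conjI ballI)
    show "\<forall>x. f differentiable (at x)" using H unfolding sm_def
      by (metis empty_subsetI iter_partial.simps(1) le0 list.set(1) list.size(3))
    fix b :: 'a assume b: "b \<in> Basis"
    show "sm n (pd b f)" unfolding sm_def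
    proof (intro allI impI)
      fix bs :: "'a list" and x assume "set bs \<subseteq> Basis \<and> length bs \<le> n"
      with b have "set (bs @ [b]) \<subseteq> Basis \<and> length (bs @ [b]) \<le> Suc n" by auto
      with H have "iter_partial (bs @ [b]) f differentiable (at x)" unfolding sm_def by blast
      then show "iter_partial bs (pd b f) differentiable (at x)" by (simp add: iter_partial_snoc)
    qed
  qed
next
  assume H: "(\<forall>x. f differentiable (at x)) \<and> (\<forall>b\<in>Basis. sm n (pd b f))"
  show "sm (Suc n) f" unfolding sm_def
  proof (intro allI impI)
    fix bs :: "'a list" and x assume A: "set bs \<subseteq> Basis \<and> length bs \<le> Suc n"
    show "iter_partial bs f differentiable (at x)"
    proof (cases bs rule: rev_exhaust)
      case Nil then show ?thesis using H by simp
    next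
      case (snoc bs' b)
      with A have "b \<in> Basis" "set bs' \<subseteq> Basis" "length bs' \<le> n" by auto
      with H have "iter_partial bs' (pd b f) differentiable (at x)" unfolding sm_def by blast
      then show ?thesis by (simp add: snoc iter_partial_snoc)
    qed
  qed
qed

lemma sm_Suc_D: "sm (Suc n) f \<Longrightarrow> sm n f"
  unfolding sm_def by auto

lemma sm_diff: "sm n f \<Longrightarrow> f differentiable (at x)"
  by (induction n) (auto simp: sm_0 sm_Suc)

lemma pd_add:
  assumes "\<And>x. f differentiable (at x)" "\<And>x. g differentiable (at x)"
  shows "pd b (\<lambda>x. f x + g x) = (\<lambda>x. pd b f x + pd b g x)"
proof
  fix x
  have "((\<lambda>x. f x + g x) has_derivative (\<lambda>h. frechet_derivative f (at x) h + frechet_derivative g (at x) h)) (at x)"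
    using assms by (intro has_derivative_add) (auto simp: frechet_derivative_works[symmetric])
  from fun_cong[OF frechet_derivative_at[OF this], of b]
  show "pd b (\<lambda>x. f x + g x) x = pd b f x + pd b g x"
    unfolding pd_def by simp
qed

lemma pd_mult:
  assumes "\<And>x. f differentiable (at x)" "\<And>x. g differentiable (at x)"
  shows "pd b (\<lambda>x. f x * g x) = (\<lambda>x. f x * pd b g x + pd b f x * g x)"
proof
  fix x
  have "((\<lambda>x. f x * g x) has_derivative (\<lambda>h. f x * frechet_derivative g (at x) h + frechet_derivative f (at x) h * g x)) (at x)"
    using assms by (intro has_derivative_mult) (auto simp: frechet_derivative_works[symmetric])
  from fun_cong[OF frechet_derivative_at[OF this], of b]
  show "pd b (\<lambda>x. f x * g x) x = f x * pd b g x + pd b f x * g x"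
    unfolding pd_def by simp
qed

lemma pd_const: "pd b (\<lambda>x. c) = (\<lambda>x. 0)"
  by (simp add: pd_def)

lemma sm_const: "sm n (\<lambda>x. c)"
  by (induction n arbitrary: c) (auto simp: sm_0 sm_Suc pd_const)

lemma sm_add: "sm n f \<Longrightarrow> sm n g \<Longrightarrow> sm n (\<lambda>x. f x + g x)"
proof (induction n arbitrary: f g)
  case 0 then show ?case by (auto simp: sm_0)
next
  case (Suc n)
  have df: "\<And>x. f differentiable (at x)" and dg: "\<And>x. g differentiable (at x)"
    using Suc.prems sm_diff by blast+
  show ?case unfolding sm_Suc
  proof (intro conjI ballI allI)
    fix x show "(\<lambda>x. f x + g x) differentiable (at x)" using df dg by (intro differentiable_add)
  next
    fix b :: 'a assume b: "b \<in> Basis"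
    have "sm n (pd b f)" "sm n (pd b g)"
      using Suc.prems b by (auto simp: sm_Suc)
    then show "sm n (pd b (\<lambda>x. f x + g x))"
      unfolding pd_add[OF df dg] by (rule Suc.IH)
  qed
qed

lemma sm_mult: "sm n f \<Longrightarrow> sm n g \<Longrightarrow> sm n (\<lambda>x. f x * g x)"
proof (induction n arbitrary: f g)
  case 0 then show ?case by (auto simp: sm_0)
next
  case (Suc n)
  have df: "\<And>x. f differentiable (at x)" and dg: "\<And>x. g differentiable (at x)"
    using Suc.prems sm_diff by blast+
  show ?case unfolding sm_Suc
  proof (intro conjI ballI allI)
    fix x show "(\<lambda>x. f x * g x) differentiable (at x)" using df dg by auto
  next
    fix b :: 'a assume b: "b \<in> Basis"
    have "sm n (pd b f)" "sm n (pd b g)" "sm n f" "sm n g"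
      using Suc.prems b by (auto simp: sm_Suc intro: sm_Suc_D)
    then show "sm n (pd b (\<lambda>x. f x * g x))"
      unfolding pd_mult[OF df dg] by (intro sm_add Suc.IH)
  qed
qed

lemma sm_linear: "bounded_linear f \<Longrightarrow> sm n f"
proof (cases n)
  case 0
  assume "bounded_linear f" then show ?thesis
    using 0 by (auto simp: sm_0 intro: bounded_linear_imp_differentiable)
next
  case (Suc m)
  assume L: "bounded_linear f"
  have "pd b f = (\<lambda>x. f b)" for b
  proof
    fix x
    have "frechet_derivative f (at x) = f"
      using frechet_derivative_at[OF bounded_linear_imp_has_derivative[OF L]] by simp
    then show "pd b f x = f b" unfolding pd_def by simp
  qed
  then show ?thesis using Suc L by (auto simp: sm_Suc sm_const intro: bounded_linear_imp_differentiable)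
qed

lemma sm_poly: "real_polynomial_function f \<Longrightarrow> sm n (f :: 'a::euclidean_space \<Rightarrow> real)"
  by (induction rule: real_polynomial_function.induct) (auto intro: sm_linear sm_const sm_add sm_mult)

definition rs :: "real set \<Rightarrow> (nat \<Rightarrow> real \<Rightarrow> real) \<Rightarrow> bool" where
  "rs A F \<longleftrightarrow> (\<forall>n t. t \<in> A \<longrightarrow> (F n has_real_derivative F (Suc n) t) (at t))"

lemma rsD: "rs A F \<Longrightarrow> t \<in> A \<Longrightarrow> (F n has_real_derivative F (Suc n) t) (at t)"
  unfolding rs_def by blast

lemma pd_comp:
  assumes "(F has_real_derivative F' (f x)) (at (f x))" "f differentiable (at x)"
  shows "pd b (\<lambda>x. F (f x)) x = F' (f x) * pd b f x"
proof -
  have d1: "(f has_derivative frechet_derivative f (at x)) (at x)"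
    using assms(2) frechet_derivative_works by blast
  have d2: "(F has_derivative (\<lambda>h. F' (f x) * h)) (at (f x))"
    using assms(1) by (simp add: has_field_derivative_def)
  have D: "((\<lambda>x. F (f x)) has_derivative (\<lambda>h. F' (f x) * frechet_derivative f (at x) h)) (at x)"
    using diff_chain_at[OF d1 d2] by (simp add: o_def)
  have "frechet_derivative (\<lambda>x. F (f x)) (at x) = (\<lambda>h. F' (f x) * frechet_derivative f (at x) h)"
    using frechet_derivative_at[OF D] by (rule sym)
  from fun_cong[OF this, of b] show ?thesis unfolding pd_def by (simp only:)
qed

lemma sm_comp:
  assumes "rs A F" "open A" "\<And>x. f x \<in> A" "sm n f"
  shows "sm n (\<lambda>x. F k (f x))"
  using assms(4)
proof (induction n arbitrary: k)
  case 0
  have dF: "\<And>x. (F k has_real_derivative F (Suc k) (f x)) (at (f x))"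
    by (rule rsD[OF assms(1) assms(3)])
  show ?case unfolding sm_0
  proof
    fix x
    have "F k differentiable (at (f x))"
      using dF[of x] by (metis differentiableI has_field_derivative_imp_has_derivative)
    moreover have "f differentiable (at x)" using 0 sm_diff by blast
    ultimately show "(\<lambda>x. F k (f x)) differentiable (at x)"
      using differentiable_chain_at[of f x "F k"] by (simp add: o_def)
  qed
next
  case (Suc n)
  have df: "\<And>x. f differentiable (at x)" using Suc.prems sm_diff by blast
  have dF: "\<And>x. (F k has_real_derivative F (Suc k) (f x)) (at (f x))" for k
    by (rule rsD[OF assms(1) assms(3)])
  have e: "pd b (\<lambda>x. F k (f x)) = (\<lambda>x. F (Suc k) (f x) * pd b f x)" for b
    by (rule ext) (rule pd_comp[where F="F k" and F'="F (Suc k)" and f=f, OF dF df])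
  show ?case unfolding sm_Suc
  proof (intro conjI ballI allI)
    fix x show "(\<lambda>x. F k (f x)) differentiable (at x)"
      using Suc.IH[OF sm_Suc_D[OF Suc.prems]] sm_diff by blast
  next
    fix b :: 'a assume b: "b \<in> Basis"
    have "sm n (pd b f)" "sm n f" using Suc.prems b by (auto simp: sm_Suc intro: sm_Suc_D)
    then show "sm n (pd b (\<lambda>x. F k (f x)))"
      unfolding e by (intro sm_mult Suc.IH)
  qed
qed

fun PP :: "nat \<Rightarrow> real poly" where
  "PP 0 = 1"
| "PP (Suc n) = [:0,0,1:] * (PP n - pderiv (PP n))"

definition fh :: "nat \<Rightarrow> real \<Rightarrow> real" where
  "fh n t = (if t > 0 then poly (PP n) (1/t) * exp (-1/t) else 0)"

lemma poly_exp_lim: "((\<lambda>t. poly Q (1/t) * exp (-1/t)) \<longlongrightarrow> 0) (at_right (0::real))"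
proof -
  have "((\<lambda>s. \<Sum>i\<le>degree Q. coeff Q i * (s ^ i / exp s)) \<longlongrightarrow> (\<Sum>i\<le>degree Q. coeff Q i * 0)) at_top"
    by (intro tendsto_sum tendsto_mult tendsto_const tendsto_power_div_exp_0)
  then have A: "((\<lambda>s. \<Sum>i\<le>degree Q. coeff Q i * (s ^ i / exp s)) \<longlongrightarrow> 0) at_top" by simp
  have L: "((\<lambda>s. poly Q s * exp (- s)) \<longlongrightarrow> 0) at_top"
  proof (rule Lim_transform_eventually[OF A always_eventually], intro allI)
    fix s :: real
    show "(\<Sum>i\<le>degree Q. coeff Q i * (s ^ i / exp s)) = poly Q s * exp (- s)"
      by (simp add: poly_altdef exp_minus sum_distrib_right divide_inverse mult.assoc)
  qed
  have "((\<lambda>t. poly Q (inverse t) * exp (- inverse t)) \<longlongrightarrow> 0) (at_right (0::real))"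
    using filterlim_compose[OF L filterlim_inverse_at_top_right] by (simp add: o_def)
  then show ?thesis by (simp add: inverse_eq_divide)
qed

lemma fh_deriv_pos:
  assumes "t > 0"
  shows "(fh n has_real_derivative fh (Suc n) t) (at t)"
proof -
  have e: "eventually (\<lambda>y. fh n y = poly (PP n) (1/y) * exp (-1/y)) (nhds t)"
    using eventually_nhds_in_open[of "{0<..}" t] assms
    by (auto simp: fh_def elim!: eventually_mono)
  have "((\<lambda>y. poly (PP n) (1/y) * exp (-1/y)) has_real_derivative
      poly (pderiv (PP n)) (1/t) * (- 1 / t^2) * exp (-1/t) + poly (PP n) (1/t) * (exp (-1/t) * (1 / t^2))) (at t)"
    using assms
    by (auto intro!: derivative_eq_intros DERIV_chain2[OF poly_DERIV] simp: power2_eq_square field_simps)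
  moreover have "poly (pderiv (PP n)) (1/t) * (- 1 / t^2) * exp (-1/t) + poly (PP n) (1/t) * (exp (-1/t) * (1 / t^2))
     = fh (Suc n) t"
    using assms by (simp add: fh_def algebra_simps power2_eq_square divide_inverse)
  ultimately show ?thesis
    using DERIV_cong_ev[OF refl e refl] by simp
qed

lemma fh_deriv_neg:
  assumes "t < 0"
  shows "(fh n has_real_derivative fh (Suc n) t) (at t)"
proof -
  have e: "eventually (\<lambda>y. fh n y = 0) (nhds t)"
    using eventually_nhds_in_open[of "{..<0}" t] assms
    by (auto simp: fh_def elim!: eventually_mono)
  have "fh (Suc n) t = 0" using assms by (simp add: fh_def)
  then show ?thesis
    using DERIV_cong_ev[OF refl e refl] by simp
qed

lemma fh_deriv_0: "(fh n has_real_derivative fh (Suc n) 0) (at 0)"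
proof -
  have z: "fh (Suc n) 0 = 0" "fh n 0 = 0" by (simp_all add: fh_def)
  have "((\<lambda>y. (fh n y - fh n 0) / (y - 0)) \<longlongrightarrow> 0) (at (0::real))"
  proof (rule filterlim_split_at)
    show "((\<lambda>y. (fh n y - fh n 0) / (y - 0)) \<longlongrightarrow> 0) (at_left 0)"
      by (rule tendsto_eventually) (auto simp: eventually_at_left_field fh_def intro: exI[of _ "-1"])
  next
    have "((\<lambda>t. poly ([:0,1:] * PP n) (1/t) * exp (-1/t)) \<longlongrightarrow> 0) (at_right (0::real))"
      by (rule poly_exp_lim)
    moreover have "eventually (\<lambda>t. poly ([:0,1:] * PP n) (1/t) * exp (-1/t) = (fh n t - fh n 0) / (t - 0)) (at_right 0)"
      by (auto simp: eventually_at_right_field fh_def intro!: exI[of _ 1])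
    ultimately show "((\<lambda>y. (fh n y - fh n 0) / (y - 0)) \<longlongrightarrow> 0) (at_right 0)"
      by (rule Lim_transform_eventually)
  qed
  then show ?thesis using z by (simp add: has_field_derivative_iff)
qed

lemma rs_fh: "rs UNIV fh"
  unfolding rs_def using fh_deriv_pos fh_deriv_neg fh_deriv_0
  by (metis linorder_neqE_linordered_idom)

lemma fh0: "fh 0 t = (if t > 0 then exp (-1/t) else 0)"
  by (simp add: fh_def)

fun cc :: "nat \<Rightarrow> real" where
  "cc 0 = 1"
| "cc (Suc k) = cc k * (-1/2 - real k)"

definition RR :: "nat \<Rightarrow> real \<Rightarrow> real" where
  "RR k t = cc k * t powr (-1/2 - real k)"

lemma RR_fun: "RR n = (\<lambda>t. cc n * t powr (-1/2 - real n))"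
  by (rule ext) (simp only: RR_def)

lemma rs_RR: "rs {0<..} RR"
  unfolding rs_def
proof (intro allI impI)
  fix n and t :: real assume "t \<in> {0<..}"
  then have t: "t > 0" by simp
  have D: "((\<lambda>t. cc n * t powr (-1/2 - real n)) has_real_derivative cc n * ((-1/2 - real n) * t powr (-1/2 - real n - 1))) (at t)"
    by (intro DERIV_cmult has_real_derivative_powr t)
  have ex: "-1/2 - real (Suc n) = -1/2 - real n - 1" by simp
  have e: "RR (Suc n) t = cc n * ((-1/2 - real n) * t powr (-1/2 - real n - 1))"
    unfolding RR_def cc.simps ex by (simp only: mult.assoc)
  show "(RR n has_real_derivative RR (Suc n) t) (at t)"
    unfolding e RR_fun[of n] by (rule D)
qed

lemma RR0: "t > 0 \<Longrightarrow> RR 0 t = 1 / sqrt t"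
proof -
  assume t: "t > 0"
  have "RR 0 t = t powr (- (1/2))" by (simp add: RR_def)
  also have "\<dots> = 1 / t powr (1/2)" by (rule powr_minus_divide)
  also have "\<dots> = 1 / sqrt t" using t by (simp add: powr_half_sqrt)
  finally show ?thesis .
qed

lemma sm_cont: "sm n f \<Longrightarrow> continuous_on S f"
  by (meson differentiable_at_imp_differentiable_on differentiable_imp_continuous_on sm_diff)

lemma cutoff:
  fixes S1 S2 :: "'a::euclidean_space set"
  assumes "compact S1" "compact S2" "S1 \<inter> S2 = {}"
  obtains c1 c2 :: "'a \<Rightarrow> real" and N1 N2 where
    "\<And>n. sm n c1" "\<And>n. sm n c2" "\<And>x. (c1 x)\<^sup>2 + (c2 x)\<^sup>2 = 1"
    "open N1" "S1 \<subseteq> N1" "\<And>x. x \<in> N1 \<Longrightarrow> c2 x = 0"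
    "open N2" "S2 \<subseteq> N2" "\<And>x. x \<in> N2 \<Longrightarrow> c1 x = 0"
proof -
  define f where "f x = (if x \<in> S1 then 1 else -1::real)" for x
  have "continuous_on (S1 \<union> S2) f"
  proof (rule continuous_on_closed_Un)
    show "closed S1" "closed S2" using assms compact_imp_closed by auto
    show "continuous_on S1 f" by (rule continuous_on_eq[OF continuous_on_const[of S1 1]]) (simp add: f_def)
    show "continuous_on S2 f" using assms(3)
      by (intro continuous_on_eq[OF continuous_on_const[of S2 "-1"]]) (auto simp: f_def)
  qed
  then obtain p where p: "real_polynomial_function p" "\<And>x. x \<in> S1 \<union> S2 \<Longrightarrow> \<bar>f x - p x\<bar> < 1/4"
    using Stone_Weierstrass_real_polynomial_function[of "S1 \<union> S2" f "1/4"] assms by auto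
  have pS1: "p x > 1/4" if "x \<in> S1" for x
  proof -
    have "\<bar>1 - p x\<bar> < 1/4" using p(2)[of x] that by (simp add: f_def)
    then show ?thesis by arith
  qed
  have pS2: "p x < -1/4" if "x \<in> S2" for x
  proof -
    have "x \<notin> S1" using assms(3) that by blast
    then have "\<bar>-1 - p x\<bar> < 1/4" using p(2)[of x] that by (simp add: f_def)
    then show ?thesis by arith
  qed
  have smp: "sm n p" for n using p(1) by (rule sm_poly)
  define s1 where "s1 x = fh 0 (p x + 1/4)" for x
  define s2 where "s2 x = fh 0 (1/4 - p x)" for x
  define s where "s x = s1 x * s1 x + s2 x * s2 x" for x
  have sm1: "sm n s1" for n
    unfolding s1_def using sm_comp[OF rs_fh open_UNIV, of "\<lambda>x. p x + 1/4" n 0]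
    by (simp add: sm_add smp sm_const)
  have sm2: "sm n s2" for n
  proof -
    have "sm n (\<lambda>x. (-1) * p x + 1/4)" by (intro sm_add sm_mult sm_const smp)
    then show ?thesis
      unfolding s2_def using sm_comp[OF rs_fh open_UNIV, of "\<lambda>x. (-1) * p x + 1/4" n 0] by simp
  qed
  have sms: "sm n s" for n unfolding s_def by (intro sm_add sm_mult sm1 sm2)
  have spos: "s x > 0" for x
  proof (cases "p x + 1/4 > 0")
    case True
    then have "s1 x > 0" by (simp add: s1_def fh0)
    then show ?thesis unfolding s_def by (simp add: add_pos_nonneg)
  next
    case False
    then have "s2 x > 0" by (simp add: s2_def fh0)
    then show ?thesis unfolding s_def by (simp add: add_nonneg_pos)
  qed
  define r where "r x = RR 0 (s x)" for x
  have smr: "sm n r" for n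
    unfolding r_def using sm_comp[OF rs_RR open_greaterThan, of s n 0] spos sms by simp
  define c1 where "c1 x = s1 x * r x" for x
  define c2 where "c2 x = s2 x * r x" for x
  show ?thesis
  proof
    show "sm n c1" for n unfolding c1_def by (intro sm_mult sm1 smr)
    show "sm n c2" for n unfolding c2_def by (intro sm_mult sm2 smr)
    show "(c1 x)\<^sup>2 + (c2 x)\<^sup>2 = 1" for x
    proof -
      have "(r x)\<^sup>2 = 1 / s x" using spos[of x] by (simp add: r_def RR0 power_divide)
      moreover have "(c1 x)\<^sup>2 + (c2 x)\<^sup>2 = (r x)\<^sup>2 * s x"
        by (simp add: c1_def c2_def s_def power2_eq_square algebra_simps)
      ultimately show ?thesis using spos[of x] by simp
    qed
    have cp: "continuous_on UNIV p" using smp[of 0] by (rule sm_cont)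
    show "open {x. 1/4 < p x}" by (rule open_Collect_less[OF continuous_on_const cp])
    show "S1 \<subseteq> {x. 1/4 < p x}" using pS1 by auto
    show "c2 x = 0" if "x \<in> {x. 1/4 < p x}" for x using that by (simp add: c2_def s2_def fh0)
    show "open {x. p x < -1/4}" by (rule open_Collect_less[OF cp continuous_on_const])
    show "S2 \<subseteq> {x. p x < -1/4}" using pS2 by auto
    show "c1 x = 0" if "x \<in> {x. p x < -1/4}" for x using that by (simp add: c1_def s1_def fh0)
  qed
qed

lemma grad_pd: "grad f x = (\<Sum>b\<in>Basis. pd b f x *\<^sub>R b)"
  by (simp add: grad_def pd_def)

lemma grad_cont:
  assumes "sm (Suc 0) f"
  shows "continuous_on S (\<lambda>x. (norm (grad f x))\<^sup>2)"
proof -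
  have "continuous_on S (pd b f)" if "b \<in> Basis" for b
  proof -
    have "sm 0 (pd b f)" using assms that by (simp add: sm_Suc)
    then show ?thesis by (rule sm_cont)
  qed
  then show ?thesis unfolding grad_pd by (intro continuous_intros) auto
qed

lemma pd_zero_open:
  assumes "open U" "x \<in> U" "\<And>y. y \<in> U \<Longrightarrow> f y = 0"
  shows "pd b f x = 0"
proof -
  have "((\<lambda>y. 0::real) has_derivative (\<lambda>h. 0)) (at x)" by simp
  then have "(f has_derivative (\<lambda>h. 0)) (at x)"
    by (rule has_derivative_transform_within_open[OF _ assms(1,2)]) (use assms(3) in auto)
  then have "frechet_derivative f (at x) = (\<lambda>h. 0)"
    using frechet_derivative_at by metis
  then show ?thesis by (simp add: pd_def)
qed

lemma grad_zero_open:
  assumes "open U" "x \<in> U" "\<And>y. y \<in> U \<Longrightarrow> f y = 0"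
  shows "grad f x = 0"
  unfolding grad_pd using pd_zero_open[OF assms] by simp

lemma grad_zero_outside:
  assumes "x \<notin> closure {x. f x \<noteq> 0}"
  shows "grad f x = 0"
  by (rule grad_zero_open[of "- closure {x. f x \<noteq> 0}"]) (use assms closure_subset[of "{x. f x \<noteq> 0}"] in auto)

lemma zero_outside:
  assumes "x \<notin> closure {x. f x \<noteq> 0}"
  shows "f x = 0"
  using assms closure_subset[of "{x. f x \<noteq> 0}"] by auto

lemma si_transfer:
  assumes "set_integrable lebesgue K f" "K \<subseteq> \<Omega>" "\<And>x. x \<notin> K \<Longrightarrow> f x = 0"
  shows "set_integrable lebesgue \<Omega> (f :: 'a::euclidean_space \<Rightarrow> real)"
proof -
  have "(\<lambda>x. indicator \<Omega> x *\<^sub>R f x) = (\<lambda>x. indicator K x *\<^sub>R f x)"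
  proof (rule ext)
    fix x show "indicator \<Omega> x *\<^sub>R f x = indicator K x *\<^sub>R f x"
    proof (cases "x \<in> K")
      case True then have "x \<in> \<Omega>" using assms(2) by blast
      with True show ?thesis by simp
    next
      case False then show ?thesis using assms(3) by simp
    qed
  qed
  then show ?thesis using assms(1) unfolding set_integrable_def by simp
qed

lemma compact_sets_lebesgue: "compact K \<Longrightarrow> K \<in> sets lebesgue"
  using lmeasurable_compact fmeasurableD by blast

lemma si_cont:
  fixes g :: "'a::euclidean_space \<Rightarrow> real"
  assumes "continuous_on UNIV g" "compact K"
  shows "set_integrable lebesgue K g"
proof -
  obtain a where a: "K \<subseteq> cbox (-a) a"
    using bounded_subset_cbox_symmetric compact_imp_bounded assms(2) by metis
  have "g absolutely_integrable_on cbox (-a) a"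
    by (rule absolutely_integrable_continuous) (rule continuous_on_subset[OF assms(1)], simp)
  then show ?thesis
    using set_integrable_subset compact_sets_lebesgue[OF assms(2)] a by blast
qed

lemma si_V:
  fixes w V :: "'a::euclidean_space \<Rightarrow> real"
  assumes "set_integrable lebesgue K V" "continuous_on UNIV w" "compact K"
  shows "set_integrable lebesgue K (\<lambda>x. V x * w x)"
proof -
  have Ks: "K \<in> sets lebesgue" using compact_sets_lebesgue[OF assms(3)] .
  have m: "w \<in> borel_measurable (lebesgue_on K)"
    by (rule continuous_imp_measurable_on_sets_lebesgue[OF continuous_on_subset[OF assms(2)] Ks]) simp
  have b: "bounded (w ` K)"
    using compact_continuous_image[OF continuous_on_subset[OF assms(2)] assms(3)] compact_imp_bounded by blast
  have "(\<lambda>x. w x * V x) absolutely_integrable_on K"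
    using absolutely_integrable_bounded_measurable_product[OF bilinear_times m Ks b assms(1)] by simp
  then show ?thesis by (simp add: mult.commute)
qed

lemma test_sm: "test_fun \<Omega> v \<Longrightarrow> sm n v"
  by (simp add: test_fun_def smooth_fun_sm)

lemma test_pos:
  fixes v :: "'a::euclidean_space \<Rightarrow> real"
  assumes "test_fun \<Omega> v" "v \<noteq> (\<lambda>x. 0)"
  shows "(LINT x:\<Omega>|lebesgue. (v x)\<^sup>2) > 0"
proof -
  define K where "K = closure {x. v x \<noteq> 0}"
  have K: "compact K" "K \<subseteq> \<Omega>" using assms(1) by (auto simp: test_fun_def K_def)
  have cv: "continuous_on UNIV v" using test_sm[OF assms(1)] sm_cont by blast
  have cv2: "continuous_on UNIV (\<lambda>x. (v x)\<^sup>2)" by (rule continuous_on_power[OF cv])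
  have int: "set_integrable lebesgue \<Omega> (\<lambda>x. (v x)\<^sup>2)"
  proof (rule si_transfer[OF si_cont[OF cv2 K(1)] K(2)])
    fix x assume "x \<notin> K"
    then have "v x = 0" unfolding K_def by (rule zero_outside)
    then show "(v x)\<^sup>2 = 0" by simp
  qed
  then have int': "integrable lebesgue (\<lambda>x. indicator \<Omega> x *\<^sub>R (v x)\<^sup>2)"
    by (simp add: set_integrable_def)
  have nn: "AE x in lebesgue. 0 \<le> indicator \<Omega> x *\<^sub>R (v x)\<^sup>2" by (simp add: indicator_def)
  have ge: "(LINT x:\<Omega>|lebesgue. (v x)\<^sup>2) \<ge> 0"
    unfolding set_lebesgue_integral_def using nn by (intro integral_nonneg_AE) 
  show ?thesis
  proof (rule ccontr)
    assume "\<not> ?thesis"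
    with ge have "(LINT x:\<Omega>|lebesgue. (v x)\<^sup>2) = 0" by simp
    then have AE0: "AE x in lebesgue. indicator \<Omega> x *\<^sub>R (v x)\<^sup>2 = 0"
      using integral_nonneg_eq_0_iff_AE[OF int' nn] unfolding set_lebesgue_integral_def by simp
    obtain x0 where x0: "v x0 \<noteq> 0" using assms(2) by auto
    have oU: "open {x. v x \<noteq> 0}" by (rule open_Collect_neq[OF cv continuous_on_const])
    obtain e where e: "e > 0" "ball x0 e \<subseteq> {x. v x \<noteq> 0}"
      by (rule openE[OF oU]) (use x0 in auto)
    have sub: "{x. v x \<noteq> 0} \<subseteq> \<Omega>" using K(2) closure_subset[of "{x. v x \<noteq> 0}"] unfolding K_def by blast
    have "AE x in lebesgue. x \<notin> ball x0 e"
      using AE0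
    proof (rule eventually_mono)
      fix x assume H: "indicator \<Omega> x *\<^sub>R (v x)\<^sup>2 = 0"
      show "x \<notin> ball x0 e"
      proof
        assume "x \<in> ball x0 e"
        then have "v x \<noteq> 0" "x \<in> \<Omega>" using e sub by auto
        then show False using H by simp
      qed
    qed
    then have "emeasure lebesgue (ball x0 e) = 0"
      by (subst (asm) AE_iff_measurable[of "ball x0 e"]) auto
    then have "emeasure lborel (ball x0 e) = 0" by simp
    then have "measure lborel (ball x0 e) = 0" by (simp add: measure_def)
    with content_ball_pos[OF e(1), of x0] show False by simp
  qed
qed

lemma get_bound:
  fixes W :: "'a::euclidean_space \<Rightarrow> real"
  assumes "lambda1 \<Omega> W > -\<infinity>"
  obtains L where "L \<le> 0" "\<And>v. test_fun \<Omega> v \<Longrightarrow>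
     L * (LINT x:\<Omega>|lebesgue. (v x)\<^sup>2) \<le> (LINT x:\<Omega>|lebesgue. (norm (grad v x))\<^sup>2 - W x * (v x)\<^sup>2)"
proof -
  have "\<exists>r. ereal r \<le> lambda1 \<Omega> W"
  proof (cases "lambda1 \<Omega> W")
    case (real r) then show ?thesis by auto
  next
    case PInf then show ?thesis by auto
  next
    case MInf then show ?thesis using assms by simp
  qed
  then obtain r where r: "ereal r \<le> lambda1 \<Omega> W" by blast
  show ?thesis
  proof (rule that[of "min r 0"])
    fix v assume tv: "test_fun \<Omega> v"
    show "min r 0 * (LINT x:\<Omega>|lebesgue. (v x)\<^sup>2) \<le> (LINT x:\<Omega>|lebesgue. (norm (grad v x))\<^sup>2 - W x * (v x)\<^sup>2)"
    proof (cases "v = (\<lambda>x. 0)")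
      case True
      have "grad v x = 0" for x unfolding True grad_def by simp
      then show ?thesis using True by simp
    next
      case False
      have D: "(LINT x:\<Omega>|lebesgue. (v x)\<^sup>2) > 0" by (rule test_pos[OF tv False])
      have "lambda1 \<Omega> W \<le> ereal ((LINT x:\<Omega>|lebesgue. (norm (grad v x))\<^sup>2 - W x * (v x)\<^sup>2) / (LINT x:\<Omega>|lebesgue. (v x)\<^sup>2))"
        unfolding lambda1_def by (rule INF_lower) (use tv False in auto)
      with r have "min r 0 \<le> (LINT x:\<Omega>|lebesgue. (norm (grad v x))\<^sup>2 - W x * (v x)\<^sup>2) / (LINT x:\<Omega>|lebesgue. (v x)\<^sup>2)"
        by (meson ereal_less_eq(3) min.coboundedI1 order_trans)
      then show ?thesis using D by (simp add: le_divide_eq)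
    qed
  qed simp
qed

lemma Linf_bound:
  fixes V :: "'a::euclidean_space \<Rightarrow> real"
  assumes "Linf_loc_on \<Omega> T V" "compact C" "C \<subseteq> T"
  obtains M where "M \<ge> 0" "AE y in lebesgue. y \<in> C \<inter> \<Omega> \<longrightarrow> \<bar>V y\<bar> \<le> M"
proof -
  have "\<forall>x\<in>C. \<exists>e. e > 0 \<and> (\<exists>M. AE y in lebesgue. y \<in> ball x e \<inter> \<Omega> \<longrightarrow> \<bar>V y\<bar> \<le> M)"
    using assms(1,3) unfolding Linf_loc_on_def by blast
  then obtain e where e: "\<forall>x\<in>C. e x > 0 \<and> (\<exists>M. AE y in lebesgue. y \<in> ball x (e x) \<inter> \<Omega> \<longrightarrow> \<bar>V y\<bar> \<le> M)"
    by metis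
  then obtain Mf where Mf: "\<forall>x\<in>C. AE y in lebesgue. y \<in> ball x (e x) \<inter> \<Omega> \<longrightarrow> \<bar>V y\<bar> \<le> Mf x"
    by metis
  have cov: "C \<subseteq> (\<Union>c\<in>C. ball c (e c))"
  proof
    fix x assume "x \<in> C"
    then show "x \<in> (\<Union>c\<in>C. ball c (e c))" using e by (intro UN_I[of x]) auto
  qed
  obtain F where F: "F \<subseteq> C" "finite F" "C \<subseteq> (\<Union>x\<in>F. ball x (e x))"
    by (rule compactE_image[OF assms(2) _ cov]) auto
  define M where "M = (\<Sum>x\<in>F. \<bar>Mf x\<bar>)"
  show ?thesis
  proof (rule that[of M])
    show "M \<ge> 0" unfolding M_def by (simp add: sum_nonneg)
    have "AE y in lebesgue. \<forall>x\<in>F. y \<in> ball x (e x) \<inter> \<Omega> \<longrightarrow> \<bar>V y\<bar> \<le> Mf x"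
      using Mf F(1,2) by (subst AE_finite_all) auto
    then show "AE y in lebesgue. y \<in> C \<inter> \<Omega> \<longrightarrow> \<bar>V y\<bar> \<le> M"
    proof (rule eventually_mono, intro impI)
      fix y assume H: "\<forall>x\<in>F. y \<in> ball x (e x) \<inter> \<Omega> \<longrightarrow> \<bar>V y\<bar> \<le> Mf x" and y: "y \<in> C \<inter> \<Omega>"
      then obtain x where x: "x \<in> F" "y \<in> ball x (e x)" using F(3) by blast
      then have "\<bar>V y\<bar> \<le> Mf x" using H y by blast
      also have "\<dots> \<le> \<bar>Mf x\<bar>" by simp
      also have "\<dots> \<le> M" unfolding M_def using x(1) F(2)
        by (intro member_le_sum) auto
      finally show "\<bar>V y\<bar> \<le> M" .
    qed
  qed
qed

lemma norm_ident:
  fixes a p q :: "'a::real_inner"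
  assumes "\<alpha> *\<^sub>R p + \<beta> *\<^sub>R q = 0" "\<alpha>\<^sup>2 + \<beta>\<^sup>2 = 1"
  shows "(norm (\<alpha> *\<^sub>R a + t *\<^sub>R p))\<^sup>2 + (norm (\<beta> *\<^sub>R a + t *\<^sub>R q))\<^sup>2 = (norm a)\<^sup>2 + t\<^sup>2 * ((norm p)\<^sup>2 + (norm q)\<^sup>2)"
proof -
  have z: "\<alpha> * inner a p + \<beta> * inner a q = 0"
  proof -
    have "inner a (\<alpha> *\<^sub>R p + \<beta> *\<^sub>R q) = 0" using assms(1) by simp
    then show ?thesis by (simp add: inner_add_right)
  qed
  have "(norm (\<alpha> *\<^sub>R a + t *\<^sub>R p))\<^sup>2 + (norm (\<beta> *\<^sub>R a + t *\<^sub>R q))\<^sup>2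
      = (\<alpha>\<^sup>2 + \<beta>\<^sup>2) * inner a a + 2 * t * (\<alpha> * inner a p + \<beta> * inner a q) + t\<^sup>2 * (inner p p + inner q q)"
    unfolding power2_norm_eq_inner by (simp add: inner_add_left inner_add_right inner_commute algebra_simps power2_eq_square)
  also have "\<dots> = (norm a)\<^sup>2 + t\<^sup>2 * ((norm p)\<^sup>2 + (norm q)\<^sup>2)"
    using z assms(2) by (simp add: power2_norm_eq_inner)
  finally show ?thesis .
qed

lemma grad_mult:
  assumes "\<And>x. f differentiable (at x)" "\<And>x. g differentiable (at x)"
  shows "grad (\<lambda>x. f x * g x) x = f x *\<^sub>R grad g x + g x *\<^sub>R grad f x"
proof -
  have "grad (\<lambda>x. f x * g x) x = (\<Sum>b\<in>Basis. (f x * pd b g x) *\<^sub>R b) + (\<Sum>b\<in>Basis. (pd b f x * g x) *\<^sub>R b)"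
    unfolding grad_pd pd_mult[OF assms] by (simp add: scaleR_add_left sum.distrib)
  also have "\<dots> = f x *\<^sub>R grad g x + g x *\<^sub>R grad f x"
    by (simp add: grad_pd scaleR_sum_right mult.commute)
  finally show ?thesis .
qed

lemma grad_orth:
  assumes "\<And>n. sm n c1" "\<And>n. sm n c2" "\<And>x. (c1 x)\<^sup>2 + (c2 x)\<^sup>2 = 1"
  shows "c1 x *\<^sub>R grad c1 x + c2 x *\<^sub>R grad c2 x = 0"
proof -
  have d1: "\<And>x. c1 differentiable (at x)" and d2: "\<And>x. c2 differentiable (at x)"
    using assms(1,2) sm_diff by blast+
  have d11: "\<And>x. (\<lambda>x. c1 x * c1 x) differentiable (at x)"
    using sm_diff[OF sm_mult[OF assms(1) assms(1)]] by blast
  have d22: "\<And>x. (\<lambda>x. c2 x * c2 x) differentiable (at x)"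
    using sm_diff[OF sm_mult[OF assms(2) assms(2)]] by blast
  have one: "(\<lambda>x. c1 x * c1 x + c2 x * c2 x) = (\<lambda>x. 1)"
    using assms(3) by (simp add: power2_eq_square)
  have "c1 x * pd b c1 x + c2 x * pd b c2 x = 0" for b
  proof -
    have "pd b (\<lambda>x. c1 x * c1 x + c2 x * c2 x) x = 0" unfolding one pd_const by simp
    then show ?thesis unfolding pd_add[OF d11 d22] pd_mult[OF d1 d1] pd_mult[OF d2 d2] by simp
  qed
  then have "(\<Sum>b\<in>Basis. (c1 x * pd b c1 x + c2 x * pd b c2 x) *\<^sub>R b) = 0" by simp
  then show ?thesis
    by (simp add: grad_pd scaleR_sum_right scaleR_add_left sum.distrib)
qed

theorem lemma4p1:
  fixes \<Omega> S1 S2 :: "'a::euclidean_space set" and V1 V2 :: "'a \<Rightarrow> real"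
  assumes "open \<Omega>" and "connected \<Omega>" and "bounded \<Omega>"
    and "compact S1" and "compact S2" and "S1 \<subseteq> closure \<Omega>" and "S2 \<subseteq> closure \<Omega>"
    and "S1 \<inter> S2 = {}"
    and "L1_loc \<Omega> V1" and "Linf_loc_on \<Omega> (closure \<Omega> - S1) V1"
    and "L1_loc \<Omega> V2" and "Linf_loc_on \<Omega> (closure \<Omega> - S2) V2"
    and "lambda1 \<Omega> V1 > -\<infinity>" and "lambda1 \<Omega> V2 > -\<infinity>"
  shows "lambda1 \<Omega> (\<lambda>x. V1 x + V2 x) > -\<infinity>"
proof -
  obtain c1 c2 :: "'a \<Rightarrow> real" and N1 N2 where c: "\<And>n. sm n c1" "\<And>n. sm n c2" "\<And>x. (c1 x)\<^sup>2 + (c2 x)\<^sup>2 = 1"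
    "open N1" "S1 \<subseteq> N1" "\<And>x. x \<in> N1 \<Longrightarrow> c2 x = 0"
    "open N2" "S2 \<subseteq> N2" "\<And>x. x \<in> N2 \<Longrightarrow> c1 x = 0"
    by (rule cutoff[OF assms(4,5,8)]) blast
  obtain L1 where L1: "L1 \<le> 0" "\<And>v. test_fun \<Omega> v \<Longrightarrow>
     L1 * (LINT x:\<Omega>|lebesgue. (v x)\<^sup>2) \<le> (LINT x:\<Omega>|lebesgue. (norm (grad v x))\<^sup>2 - V1 x * (v x)\<^sup>2)"
    by (rule get_bound[OF assms(13)]) blast
  obtain L2 where L2: "L2 \<le> 0" "\<And>v. test_fun \<Omega> v \<Longrightarrow>
     L2 * (LINT x:\<Omega>|lebesgue. (v x)\<^sup>2) \<le> (LINT x:\<Omega>|lebesgue. (norm (grad v x))\<^sup>2 - V2 x * (v x)\<^sup>2)"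
    by (rule get_bound[OF assms(14)]) blast
  have cO: "compact (closure \<Omega>)" using assms(3) by (simp add: compact_closure)
  have C1: "compact (closure \<Omega> - N1)"
    unfolding Diff_eq by (rule compact_Int_closed[OF cO]) (use c(4) in auto)
  have C2: "compact (closure \<Omega> - N2)"
    unfolding Diff_eq by (rule compact_Int_closed[OF cO]) (use c(7) in auto)
  have s1: "closure \<Omega> - N1 \<subseteq> closure \<Omega> - S1" using c(5) by blast
  have s2: "closure \<Omega> - N2 \<subseteq> closure \<Omega> - S2" using c(8) by blast
  obtain M1 where M1: "M1 \<ge> 0" "AE y in lebesgue. y \<in> (closure \<Omega> - N1) \<inter> \<Omega> \<longrightarrow> \<bar>V1 y\<bar> \<le> M1"
    by (rule Linf_bound[OF assms(10) C1 s1]) blast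
  obtain M2 where M2: "M2 \<ge> 0" "AE y in lebesgue. y \<in> (closure \<Omega> - N2) \<inter> \<Omega> \<longrightarrow> \<bar>V2 y\<bar> \<le> M2"
    by (rule Linf_bound[OF assms(12) C2 s2]) blast
  define G where "G x = (norm (grad c1 x))\<^sup>2 + (norm (grad c2 x))\<^sup>2" for x
  have cG: "continuous_on UNIV G"
    unfolding G_def by (intro continuous_on_add grad_cont c)
  have "bounded (G ` closure \<Omega>)"
    by (rule compact_imp_bounded[OF compact_continuous_image[OF continuous_on_subset[OF cG] cO]]) simp
  then obtain GB where GB: "\<And>y. y \<in> G ` closure \<Omega> \<Longrightarrow> norm y \<le> GB" by (auto simp: bounded_iff)
  define Gm where "Gm = max GB 0"
  have Gm: "Gm \<ge> 0" "\<And>x. x \<in> closure \<Omega> \<Longrightarrow> G x \<le> Gm"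
  proof -
    show "Gm \<ge> 0" by (simp add: Gm_def)
    fix x assume "x \<in> closure \<Omega>"
    then have "norm (G x) \<le> GB" using GB by blast
    then show "G x \<le> Gm" unfolding Gm_def by simp
  qed
  define B where "B = L1 + L2 - M1 - M2 - Gm"
  have key: "B * (LINT x:\<Omega>|lebesgue. (u x)\<^sup>2) \<le> (LINT x:\<Omega>|lebesgue. (norm (grad u x))\<^sup>2 - (V1 x + V2 x) * (u x)\<^sup>2)"
    if tu: "test_fun \<Omega> u" for u
  proof -
    define K where "K = closure {x. u x \<noteq> 0}"
    have K: "compact K" "K \<subseteq> \<Omega>" using tu by (auto simp: test_fun_def K_def)
    have Kc: "open (- K)" using K(1) compact_imp_closed by blast
    have smu: "sm n u" for n using test_sm[OF tu] .
    have uz: "u x = 0" if "x \<notin> K" for x using that unfolding K_def by (rule zero_outside)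
    have gz: "grad u x = 0" if "x \<notin> K" for x using that unfolding K_def by (rule grad_zero_outside)
    define v1 where "v1 x = c1 x * u x" for x
    define v2 where "v2 x = c2 x * u x" for x
    have smv1: "sm n v1" for n unfolding v1_def by (intro sm_mult c smu)
    have smv2: "sm n v2" for n unfolding v2_def by (intro sm_mult c smu)
    have v1z: "v1 x = 0" if "x \<notin> K" for x using uz[OF that] by (simp add: v1_def)
    have v2z: "v2 x = 0" if "x \<notin> K" for x using uz[OF that] by (simp add: v2_def)
    have gv1z: "grad v1 x = 0" if "x \<notin> K" for x
      by (rule grad_zero_open[OF Kc]) (use that v1z in auto)
    have gv2z: "grad v2 x = 0" if "x \<notin> K" for x
      by (rule grad_zero_open[OF Kc]) (use that v2z in auto)
    have tv: "test_fun \<Omega> v" if smv: "\<And>n. sm n v" and vz: "\<And>x. x \<notin> K \<Longrightarrow> v x = 0" for v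
    proof -
      have sub: "closure {x. v x \<noteq> 0} \<subseteq> K"
        by (rule closure_minimal) (use vz K(1) compact_imp_closed in auto)
      have "compact (K \<inter> closure {x. v x \<noteq> 0})" by (rule compact_Int_closed[OF K(1)]) simp
      moreover have "K \<inter> closure {x. v x \<noteq> 0} = closure {x. v x \<noteq> 0}" using sub by blast
      ultimately show ?thesis unfolding test_fun_def smooth_fun_sm using smv sub K(2) by auto
    qed
    have tv1: "test_fun \<Omega> v1" by (rule tv[OF smv1 v1z])
    have tv2: "test_fun \<Omega> v2" by (rule tv[OF smv2 v2z])
    have du: "\<And>x. u differentiable (at x)" using sm_diff[OF smu] .
    have dc1: "\<And>x. c1 differentiable (at x)" using sm_diff[OF c(1)] .
    have dc2: "\<And>x. c2 differentiable (at x)" using sm_diff[OF c(2)] .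
    have v1f: "v1 = (\<lambda>x. c1 x * u x)" by (rule ext) (simp add: v1_def)
    have v2f: "v2 = (\<lambda>x. c2 x * u x)" by (rule ext) (simp add: v2_def)
    have gv1: "grad v1 x = c1 x *\<^sub>R grad u x + u x *\<^sub>R grad c1 x" for x
      unfolding v1f by (rule grad_mult[OF dc1 du])
    have gv2: "grad v2 x = c2 x *\<^sub>R grad u x + u x *\<^sub>R grad c2 x" for x
      unfolding v2f by (rule grad_mult[OF dc2 du])
    have pw: "(norm (grad v1 x))\<^sup>2 + (norm (grad v2 x))\<^sup>2 = (norm (grad u x))\<^sup>2 + (u x)\<^sup>2 * G x" for x
      unfolding gv1 gv2 G_def by (rule norm_ident[OF grad_orth[OF c(1,2,3)] c(3)])
    have cu: "continuous_on UNIV u" using sm_cont[OF smu] .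
    have cc1: "continuous_on UNIV c1" using sm_cont[OF c(1)] .
    have cc2: "continuous_on UNIV c2" using sm_cont[OF c(2)] .
    have cv1: "continuous_on UNIV v1" using sm_cont[OF smv1] .
    have cv2: "continuous_on UNIV v2" using sm_cont[OF smv2] .
    have icont: "set_integrable lebesgue \<Omega> g" if "continuous_on UNIV g" "\<And>x. x \<notin> K \<Longrightarrow> g x = 0" for g :: "'a \<Rightarrow> real"
      by (rule si_transfer[OF si_cont[OF that(1) K(1)] K(2) that(2)])
    have iV: "set_integrable lebesgue \<Omega> (\<lambda>x. V x * w x)"
      if "L1_loc \<Omega> V" "continuous_on UNIV w" "\<And>x. x \<notin> K \<Longrightarrow> w x = 0" for V w :: "'a \<Rightarrow> real"
    proof -
      have "set_integrable lebesgue K V" using that(1) K unfolding L1_loc_def by blast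
      then show ?thesis
        by (rule si_transfer[OF si_V[OF _ that(2) K(1)] K(2)]) (simp add: that(3))
    qed
    have i_gu: "set_integrable lebesgue \<Omega> (\<lambda>x. (norm (grad u x))\<^sup>2)"
      by (rule icont[OF grad_cont[OF smu]]) (simp add: gz)
    have i_g1: "set_integrable lebesgue \<Omega> (\<lambda>x. (norm (grad v1 x))\<^sup>2)"
      by (rule icont[OF grad_cont[OF smv1]]) (simp add: gv1z)
    have i_g2: "set_integrable lebesgue \<Omega> (\<lambda>x. (norm (grad v2 x))\<^sup>2)"
      by (rule icont[OF grad_cont[OF smv2]]) (simp add: gv2z)
    have i_u2: "set_integrable lebesgue \<Omega> (\<lambda>x. (u x)\<^sup>2)"
      by (rule icont[OF continuous_on_power[OF cu]]) (simp add: uz)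
    have i_v1: "set_integrable lebesgue \<Omega> (\<lambda>x. (v1 x)\<^sup>2)"
      by (rule icont[OF continuous_on_power[OF cv1]]) (simp add: v1z)
    have i_v2: "set_integrable lebesgue \<Omega> (\<lambda>x. (v2 x)\<^sup>2)"
      by (rule icont[OF continuous_on_power[OF cv2]]) (simp add: v2z)
    have i_Gu: "set_integrable lebesgue \<Omega> (\<lambda>x. G x * (u x)\<^sup>2)"
      by (rule icont[OF continuous_on_mult[OF cG continuous_on_power[OF cu]]]) (simp add: uz)
    have i_M2: "set_integrable lebesgue \<Omega> (\<lambda>x. M2 * (u x)\<^sup>2)" using i_u2 by simp
    have i_M1: "set_integrable lebesgue \<Omega> (\<lambda>x. M1 * (u x)\<^sup>2)" using i_u2 by simp
    have i_Gm: "set_integrable lebesgue \<Omega> (\<lambda>x. Gm * (u x)\<^sup>2)" using i_u2 by simp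
    have i_V1v1: "set_integrable lebesgue \<Omega> (\<lambda>x. V1 x * (v1 x)\<^sup>2)"
      by (rule iV[OF assms(9) continuous_on_power[OF cv1]]) (simp add: v1z)
    have i_V2v2: "set_integrable lebesgue \<Omega> (\<lambda>x. V2 x * (v2 x)\<^sup>2)"
      by (rule iV[OF assms(11) continuous_on_power[OF cv2]]) (simp add: v2z)
    have i_B2: "set_integrable lebesgue \<Omega> (\<lambda>x. V2 x * ((c1 x)\<^sup>2 * (u x)\<^sup>2))"
      by (rule iV[OF assms(11) continuous_on_mult[OF continuous_on_power[OF cc1] continuous_on_power[OF cu]]]) (simp add: uz)
    have i_B1: "set_integrable lebesgue \<Omega> (\<lambda>x. V1 x * ((c2 x)\<^sup>2 * (u x)\<^sup>2))"
      by (rule iV[OF assms(9) continuous_on_mult[OF continuous_on_power[OF cc2] continuous_on_power[OF cu]]]) (simp add: uz)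
    define A1 where "A1 x = (norm (grad v1 x))\<^sup>2 - V1 x * (v1 x)\<^sup>2" for x
    define A2 where "A2 x = (norm (grad v2 x))\<^sup>2 - V2 x * (v2 x)\<^sup>2" for x
    define B1 where "B1 x = V1 x * ((c2 x)\<^sup>2 * (u x)\<^sup>2)" for x
    define B2 where "B2 x = V2 x * ((c1 x)\<^sup>2 * (u x)\<^sup>2)" for x
    define Gu where "Gu x = G x * (u x)\<^sup>2" for x
    have iA1: "set_integrable lebesgue \<Omega> A1" unfolding A1_def by (rule set_integral_diff(1)[OF i_g1 i_V1v1])
    have iA2: "set_integrable lebesgue \<Omega> A2" unfolding A2_def by (rule set_integral_diff(1)[OF i_g2 i_V2v2])
    have iB1: "set_integrable lebesgue \<Omega> B1" unfolding B1_def by (rule i_B1)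
    have iB2: "set_integrable lebesgue \<Omega> B2" unfolding B2_def by (rule i_B2)
    have iGu: "set_integrable lebesgue \<Omega> Gu" unfolding Gu_def by (rule i_Gu)
    have eq: "(\<lambda>x. (norm (grad u x))\<^sup>2 - (V1 x + V2 x) * (u x)\<^sup>2) = (\<lambda>x. A1 x + A2 x - B2 x - B1 x - Gu x)"
    proof (rule ext)
      fix x
      have "A1 x + A2 x - B2 x - B1 x - Gu x =
          ((norm (grad v1 x))\<^sup>2 + (norm (grad v2 x))\<^sup>2) - (V1 x + V2 x) * (u x)\<^sup>2 * ((c1 x)\<^sup>2 + (c2 x)\<^sup>2) - G x * (u x)\<^sup>2"
        by (simp add: A1_def A2_def B1_def B2_def Gu_def v1_def v2_def power_mult_distrib algebra_simps)
      also have "\<dots> = (norm (grad u x))\<^sup>2 - (V1 x + V2 x) * (u x)\<^sup>2"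
        unfolding pw c(3) by (simp add: algebra_simps)
      finally show "(norm (grad u x))\<^sup>2 - (V1 x + V2 x) * (u x)\<^sup>2 = A1 x + A2 x - B2 x - B1 x - Gu x" by simp
    qed
    have iA12: "set_integrable lebesgue \<Omega> (\<lambda>x. A1 x + A2 x)" by (rule set_integral_add(1)[OF iA1 iA2])
    have iA12B: "set_integrable lebesgue \<Omega> (\<lambda>x. A1 x + A2 x - B2 x)" by (rule set_integral_diff(1)[OF iA12 iB2])
    have iA12BB: "set_integrable lebesgue \<Omega> (\<lambda>x. A1 x + A2 x - B2 x - B1 x)" by (rule set_integral_diff(1)[OF iA12B iB1])
    define I where "I f = (LINT x:\<Omega>|lebesgue. f x)" for f :: "'a \<Rightarrow> real"
    have N: "(LINT x:\<Omega>|lebesgue. (norm (grad u x))\<^sup>2 - (V1 x + V2 x) * (u x)\<^sup>2) = I A1 + I A2 - I B2 - I B1 - I Gu"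
      unfolding eq I_def
      by (simp only: set_integral_diff(2)[OF iA12BB iGu] set_integral_diff(2)[OF iA12B iB1]
            set_integral_diff(2)[OF iA12 iB2] set_integral_add(2)[OF iA1 iA2])
    have U0: "I (\<lambda>x. (u x)\<^sup>2) \<ge> 0"
      unfolding I_def set_lebesgue_integral_def by (intro integral_nonneg_AE) (simp add: indicator_def)
    have hA1: "L1 * I (\<lambda>x. (u x)\<^sup>2) \<le> I A1"
    proof -
      have "I (\<lambda>x. (v1 x)\<^sup>2) \<le> I (\<lambda>x. (u x)\<^sup>2)"
        unfolding I_def
      proof (rule set_integral_mono[OF i_v1 i_u2])
        fix x
        have "(c1 x)\<^sup>2 \<le> 1" using c(3)[of x] by (metis le_add_same_cancel1 zero_le_power2)
        then show "(v1 x)\<^sup>2 \<le> (u x)\<^sup>2"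
          by (simp add: v1_def power_mult_distrib mult_left_le_one_le)
      qed
      then have "L1 * I (\<lambda>x. (u x)\<^sup>2) \<le> L1 * I (\<lambda>x. (v1 x)\<^sup>2)" using L1(1) by (rule mult_left_mono_neg)
      also have "\<dots> \<le> I A1" using L1(2)[OF tv1] unfolding I_def A1_def .
      finally show ?thesis .
    qed
    have hA2: "L2 * I (\<lambda>x. (u x)\<^sup>2) \<le> I A2"
    proof -
      have "I (\<lambda>x. (v2 x)\<^sup>2) \<le> I (\<lambda>x. (u x)\<^sup>2)"
        unfolding I_def
      proof (rule set_integral_mono[OF i_v2 i_u2])
        fix x
        have "(c2 x)\<^sup>2 \<le> 1" using c(3)[of x] by (metis le_add_same_cancel2 zero_le_power2)
        then show "(v2 x)\<^sup>2 \<le> (u x)\<^sup>2"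
          by (simp add: v2_def power_mult_distrib mult_left_le_one_le)
      qed
      then have "L2 * I (\<lambda>x. (u x)\<^sup>2) \<le> L2 * I (\<lambda>x. (v2 x)\<^sup>2)" using L2(1) by (rule mult_left_mono_neg)
      also have "\<dots> \<le> I A2" using L2(2)[OF tv2] unfolding I_def A2_def .
      finally show ?thesis .
    qed
    have bnd: "V * ((c x)\<^sup>2 * (u x)\<^sup>2) \<le> M * (u x)\<^sup>2" if "\<bar>V\<bar> \<le> M" "(c x)\<^sup>2 \<le> 1" for V M c x
    proof -
      have n: "0 \<le> (c x)\<^sup>2 * (u x)\<^sup>2" by simp
      have "V * ((c x)\<^sup>2 * (u x)\<^sup>2) \<le> M * ((c x)\<^sup>2 * (u x)\<^sup>2)"
        using that(1) n by (intro mult_right_mono) auto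
      also have "\<dots> \<le> M * (u x)\<^sup>2"
        using that abs_ge_zero[of V] by (intro mult_left_mono mult_left_le_one_le) auto
      finally show ?thesis .
    qed
    have hB2: "I B2 \<le> M2 * I (\<lambda>x. (u x)\<^sup>2)"
    proof -
      have "I B2 \<le> I (\<lambda>x. M2 * (u x)\<^sup>2)"
        unfolding I_def
      proof (rule set_integral_mono_AE[OF iB2 i_M2])
        show "AE x\<in>\<Omega> in lebesgue. B2 x \<le> M2 * (u x)\<^sup>2"
          using M2(2)
        proof (rule eventually_mono, intro impI)
          fix x assume H: "x \<in> (closure \<Omega> - N2) \<inter> \<Omega> \<longrightarrow> \<bar>V2 x\<bar> \<le> M2" and x: "x \<in> \<Omega>"
          show "B2 x \<le> M2 * (u x)\<^sup>2"
          proof (cases "x \<in> N2")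
            case True then show ?thesis using M2(1) c(9)[OF True] by (simp add: B2_def)
          next
            case False
            then have "\<bar>V2 x\<bar> \<le> M2" using H x closure_subset[of \<Omega>] by blast
            moreover have "(c1 x)\<^sup>2 \<le> 1" using c(3)[of x] by (metis le_add_same_cancel1 zero_le_power2)
            ultimately show ?thesis unfolding B2_def by (rule bnd)
          qed
        qed
      qed
      then show ?thesis unfolding I_def by simp
    qed
    have hB1: "I B1 \<le> M1 * I (\<lambda>x. (u x)\<^sup>2)"
    proof -
      have "I B1 \<le> I (\<lambda>x. M1 * (u x)\<^sup>2)"
        unfolding I_def
      proof (rule set_integral_mono_AE[OF iB1 i_M1])
        show "AE x\<in>\<Omega> in lebesgue. B1 x \<le> M1 * (u x)\<^sup>2"
          using M1(2)
        proof (rule eventually_mono, intro impI)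
          fix x assume H: "x \<in> (closure \<Omega> - N1) \<inter> \<Omega> \<longrightarrow> \<bar>V1 x\<bar> \<le> M1" and x: "x \<in> \<Omega>"
          show "B1 x \<le> M1 * (u x)\<^sup>2"
          proof (cases "x \<in> N1")
            case True then show ?thesis using M1(1) c(6)[OF True] by (simp add: B1_def)
          next
            case False
            then have "\<bar>V1 x\<bar> \<le> M1" using H x closure_subset[of \<Omega>] by blast
            moreover have "(c2 x)\<^sup>2 \<le> 1" using c(3)[of x] by (metis le_add_same_cancel2 zero_le_power2)
            ultimately show ?thesis unfolding B1_def by (rule bnd)
          qed
        qed
      qed
      then show ?thesis unfolding I_def by simp
    qed
    have hG: "I Gu \<le> Gm * I (\<lambda>x. (u x)\<^sup>2)"
    proof -
      have "I Gu \<le> I (\<lambda>x. Gm * (u x)\<^sup>2)"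
        unfolding I_def
      proof (rule set_integral_mono[OF iGu i_Gm])
        fix x assume "x \<in> \<Omega>"
        then have "G x \<le> Gm" using Gm(2) closure_subset[of \<Omega>] by blast
        then show "Gu x \<le> Gm * (u x)\<^sup>2" unfolding Gu_def by (intro mult_right_mono) auto
      qed
      then show ?thesis unfolding I_def by simp
    qed
    have "B * I (\<lambda>x. (u x)\<^sup>2) \<le> I A1 + I A2 - I B2 - I B1 - I Gu"
      using hA1 hA2 hB1 hB2 hG unfolding B_def by (simp add: algebra_simps)
    then show ?thesis unfolding N unfolding I_def .
  qed
  have "ereal B \<le> lambda1 \<Omega> (\<lambda>x. V1 x + V2 x)"
    unfolding lambda1_def
  proof (rule INF_greatest)
    fix u assume "u \<in> {u. test_fun \<Omega> u \<and> u \<noteq> (\<lambda>x. 0)}"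
    then have tu: "test_fun \<Omega> u" "u \<noteq> (\<lambda>x. 0)" by auto
    have D: "(LINT x:\<Omega>|lebesgue. (u x)\<^sup>2) > 0" by (rule test_pos[OF tu])
    show "ereal B \<le> ereal ((LINT x:\<Omega>|lebesgue. (norm (grad u x))\<^sup>2 - (V1 x + V2 x) * (u x)\<^sup>2) / (LINT x:\<Omega>|lebesgue. (u x)\<^sup>2))"
      using key[OF tu(1)] D by (simp add: le_divide_eq)
  qed
  moreover have "-\<infinity> < ereal B" by simp
  ultimately show ?thesis by (rule order.strict_trans2[rotated])
qed

end
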